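(* Let $\Delta_1$ and $\Delta_2$ be simplicial complexes on disjoint vertex sets. Then $\Delta_1$ and $\Delta_2$ are both $k$-shellable if and only if the join $\Delta_1\cdot\Delta_2$ is $k$-shellable.
   Context: The join is $\Delta_1\cdot\Delta_2=\{\sigma\cup\tau:\sigma\in\Delta_1,\tau\in\Delta_2\}$. $\langle F_1,\ldots,F_s\rangle$ denotes the simplicial complex with facets $F_1,\dots,F_s$. A simplicial complex $\Gamma$ of dimension $d$ is $k$-shellable ($1\le k\le d+1$) if its facets can be ordered $F_1,\ldots,F_r$ such that for every $j=2,\ldots,r$, $\Gamma_j=\langle F_j\rangle\cap\langle F_1,\ldots,F_{j-1}\rangle$ satisfies (i) $\Gamma_j$ is generated by a nonempty set of faces of $\langle F_j\rangle$ of dimension $|F_j|-k-1$; (ii) if $\Gamma_j$ has more than one facet, then for every two distinct facets $\sigma,\tau$ of $\Gamma_j$, $F_j\subseteq\sigma\cup\tau$. *)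

theory Defs
  imports Main
begin

definition simplicial_complex :: "'a set set \<Rightarrow> bool" where
  "simplicial_complex \<Delta> \<longleftrightarrow> finite \<Delta> \<and> \<Delta> \<noteq> {} \<and> (\<forall>F\<in>\<Delta>. finite F)
     \<and> (\<forall>F\<in>\<Delta>. \<forall>G. G \<subseteq> F \<longrightarrow> G \<in> \<Delta>)"

text \<open>Dimension: max size of a face minus one (as an integer, so that dim of the void-free
complex consisting only of the empty face is -1).\<close>
definition sc_dim :: "'a set set \<Rightarrow> int" where
  "sc_dim \<Delta> = int (Max (card ` \<Delta>)) - 1"

definition facets :: "'a set set \<Rightarrow> 'a set set" where
  "facets \<Delta> = {F \<in> \<Delta>. \<forall>G\<in>\<Delta>. F \<subseteq> G \<longrightarrow> G = F}"

definition gen :: "'a set set \<Rightarrow> 'a set set" where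
  "gen S = {\<tau>. \<exists>\<sigma>\<in>S. \<tau> \<subseteq> \<sigma>}"

definition join :: "'a set set \<Rightarrow> 'a set set \<Rightarrow> 'a set set" where
  "join \<Delta>1 \<Delta>2 = {\<sigma> \<union> \<tau> | \<sigma> \<tau>. \<sigma> \<in> \<Delta>1 \<and> \<tau> \<in> \<Delta>2}"

definition shelling_step :: "nat \<Rightarrow> 'a set \<Rightarrow> 'a set set \<Rightarrow> bool" where
  "shelling_step k Fj \<Gamma> \<longleftrightarrow>
     (\<exists>S. S \<noteq> {} \<and> (\<forall>\<sigma>\<in>S. \<sigma> \<subseteq> Fj \<and> int (card \<sigma>) = int (card Fj) - int k) \<and> \<Gamma> = gen S)
   \<and> (card (facets \<Gamma>) > 1 \<longrightarrow>
        (\<forall>\<sigma>\<in>facets \<Gamma>. \<forall>\<tau>\<in>facets \<Gamma>. \<sigma> \<noteq> \<tau> \<longrightarrow> Fj \<subseteq> \<sigma> \<union> \<tau>))"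

definition k_shellable :: "nat \<Rightarrow> 'a set set \<Rightarrow> bool" where
  "k_shellable k \<Delta> \<longleftrightarrow> 1 \<le> k \<and> int k \<le> sc_dim \<Delta> + 1 \<and>
     (\<exists>Fs. distinct Fs \<and> set Fs = facets \<Delta> \<and>
        (\<forall>j. 1 \<le> j \<and> j < length Fs \<longrightarrow>
           shelling_step k (Fs ! j) (gen {Fs ! j} \<inter> gen (set (take j Fs)))))"

end

theory Submission
  imports Defs
begin


lemma gen_mem: "x \<in> gen S \<longleftrightarrow> (\<exists>\<sigma>\<in>S. x \<subseteq> \<sigma>)"
  by (simp add: gen_def)

definition step2 :: "nat \<Rightarrow> 'a set \<Rightarrow> 'a set set \<Rightarrow> bool" where
  "step2 k F \<Gamma> \<longleftrightarrow> (\<exists>S. S \<noteq> {} \<and> (\<forall>\<sigma>\<in>S. \<sigma> \<subseteq> F \<and> card \<sigma> + k = card F) \<and> \<Gamma> = gen S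
     \<and> (\<forall>\<sigma>\<in>S. \<forall>\<tau>\<in>S. \<sigma> \<noteq> \<tau> \<longrightarrow> F \<subseteq> \<sigma> \<union> \<tau>))"

lemma facets_mem: "x \<in> facets D \<longleftrightarrow> x \<in> D \<and> (\<forall>G\<in>D. x \<subseteq> G \<longrightarrow> G = x)"
  unfolding facets_def by simp

lemma facets_gen_uniform:
  assumes "finite F" "\<forall>\<sigma>\<in>S. \<sigma> \<subseteq> F \<and> card \<sigma> = c"
  shows "facets (gen S) = S"
proof
  show "facets (gen S) \<subseteq> S"
  proof
    fix x assume x: "x \<in> facets (gen S)"
    then have x1: "x \<in> gen S" and x2: "\<forall>G\<in>gen S. x \<subseteq> G \<longrightarrow> G = x" unfolding facets_mem by blast+
    obtain s where s: "s \<in> S" "x \<subseteq> s" using x1 unfolding gen_mem by blast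
    have "s \<in> gen S" using s unfolding gen_mem by blast
    with x2 s have "s = x" by blast
    with s show "x \<in> S" by simp
  qed
next
  show "S \<subseteq> facets (gen S)"
  proof
    fix s assume s: "s \<in> S"
    have "\<forall>G\<in>gen S. s \<subseteq> G \<longrightarrow> G = s"
    proof (intro ballI impI)
      fix G assume G: "G \<in> gen S" "s \<subseteq> G"
      then obtain t where t: "t \<in> S" "G \<subseteq> t" unfolding gen_mem by blast
      have ft: "finite t" using t(1) assms(1,2) finite_subset by blast
      have st: "s \<subseteq> t" using G t by blast
      have "card s = card t" using s t assms(2) by simp
      then have "s = t" using card_subset_eq[OF ft st] by simp
      then show "G = s" using G t by blast
    qed
    moreover have "s \<in> gen S" using s unfolding gen_mem by blast
    ultimately show "s \<in> facets (gen S)" unfolding facets_mem by blast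
  qed
qed

lemma step_eq:
  assumes fF: "finite F"
  shows "shelling_step k F \<Gamma> \<longleftrightarrow> step2 k F \<Gamma>"
proof
  assume h: "shelling_step k F \<Gamma>"
  have h1: "\<exists>S. S \<noteq> {} \<and> (\<forall>\<sigma>\<in>S. \<sigma> \<subseteq> F \<and> int (card \<sigma>) = int (card F) - int k) \<and> \<Gamma> = gen S"
    and ii: "card (facets \<Gamma>) > 1 \<longrightarrow>
        (\<forall>\<sigma>\<in>facets \<Gamma>. \<forall>\<tau>\<in>facets \<Gamma>. \<sigma> \<noteq> \<tau> \<longrightarrow> F \<subseteq> \<sigma> \<union> \<tau>)"
    using h unfolding shelling_step_def by (rule conjunct1, rule conjunct2)
  obtain S where S: "S \<noteq> {}" "\<forall>\<sigma>\<in>S. \<sigma> \<subseteq> F \<and> int (card \<sigma>) = int (card F) - int k" "\<Gamma> = gen S"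
    using h1 by blast
  have S2: "\<forall>\<sigma>\<in>S. \<sigma> \<subseteq> F \<and> card \<sigma> + k = card F"
  proof
    fix \<sigma> assume "\<sigma> \<in> S"
    then have "\<sigma> \<subseteq> F" "int (card \<sigma>) = int (card F) - int k" using S(2) by blast+
    then show "\<sigma> \<subseteq> F \<and> card \<sigma> + k = card F" by linarith
  qed
  have S3: "\<forall>\<sigma>\<in>S. \<sigma> \<subseteq> F \<and> card \<sigma> = card F - k" using S2 by (metis add_diff_cancel_right')
  have fac: "facets \<Gamma> = S" unfolding S(3) by (rule facets_gen_uniform[OF fF S3])
  have finS: "finite S" using S2 fF by (intro finite_subset[of S "Pow F"]) auto
  have "\<forall>\<sigma>\<in>S. \<forall>\<tau>\<in>S. \<sigma> \<noteq> \<tau> \<longrightarrow> F \<subseteq> \<sigma> \<union> \<tau>"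
  proof (intro ballI impI)
    fix \<sigma> \<tau> assume a: "\<sigma> \<in> S" "\<tau> \<in> S" "\<sigma> \<noteq> \<tau>"
    have "card {\<sigma>, \<tau>} \<le> card S" using a finS by (intro card_mono) auto
    then have "card S > 1" using a by simp
    then have "\<forall>\<sigma>\<in>S. \<forall>\<tau>\<in>S. \<sigma> \<noteq> \<tau> \<longrightarrow> F \<subseteq> \<sigma> \<union> \<tau>" using ii unfolding fac by blast
    then show "F \<subseteq> \<sigma> \<union> \<tau>" using a by blast
  qed
  then show "step2 k F \<Gamma>" unfolding step2_def using S(1,3) S2 by blast
next
  assume "step2 k F \<Gamma>"
  then obtain S where S: "S \<noteq> {}" "\<forall>\<sigma>\<in>S. \<sigma> \<subseteq> F \<and> card \<sigma> + k = card F" "\<Gamma> = gen S"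
     "\<forall>\<sigma>\<in>S. \<forall>\<tau>\<in>S. \<sigma> \<noteq> \<tau> \<longrightarrow> F \<subseteq> \<sigma> \<union> \<tau>" unfolding step2_def by blast
  have S3: "\<forall>\<sigma>\<in>S. \<sigma> \<subseteq> F \<and> card \<sigma> = card F - k" using S(2) by (metis add_diff_cancel_right')
  have fac: "facets \<Gamma> = S" unfolding S(3) by (rule facets_gen_uniform[OF fF S3])
  have S4: "\<forall>\<sigma>\<in>S. \<sigma> \<subseteq> F \<and> int (card \<sigma>) = int (card F) - int k"
  proof
    fix \<sigma> assume "\<sigma> \<in> S"
    then have "\<sigma> \<subseteq> F" "card \<sigma> + k = card F" using S(2) by blast+
    then show "\<sigma> \<subseteq> F \<and> int (card \<sigma>) = int (card F) - int k" by linarith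
  qed
  have c1: "\<exists>S. S \<noteq> {} \<and> (\<forall>\<sigma>\<in>S. \<sigma> \<subseteq> F \<and> int (card \<sigma>) = int (card F) - int k) \<and> \<Gamma> = gen S"
    using S(1,3) S4 by blast
  have c2: "card (facets \<Gamma>) > 1 \<longrightarrow>
        (\<forall>\<sigma>\<in>facets \<Gamma>. \<forall>\<tau>\<in>facets \<Gamma>. \<sigma> \<noteq> \<tau> \<longrightarrow> F \<subseteq> \<sigma> \<union> \<tau>)"
    unfolding fac using S(4) by blast
  show "shelling_step k F \<Gamma>" unfolding shelling_step_def using c1 c2 by (rule conjI)
qed

lemma rank_char:
  fixes P :: "'b \<Rightarrow> 'b set \<Rightarrow> bool"
  assumes fA: "finite A"
  shows "(\<exists>Fs. distinct Fs \<and> set Fs = A \<and> (\<forall>j. 1 \<le> j \<and> j < length Fs \<longrightarrow> P (Fs ! j) (set (take j Fs))))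
     \<longleftrightarrow> (\<exists>f::'b \<Rightarrow> nat. inj_on f A \<and> (\<forall>F\<in>A. (\<exists>G\<in>A. f G < f F) \<longrightarrow> P F {G\<in>A. f G < f F}))"
proof
  assume "\<exists>Fs. distinct Fs \<and> set Fs = A \<and> (\<forall>j. 1 \<le> j \<and> j < length Fs \<longrightarrow> P (Fs ! j) (set (take j Fs)))"
  then obtain Fs where d: "distinct Fs" and sA: "set Fs = A"
    and st: "\<forall>j. 1 \<le> j \<and> j < length Fs \<longrightarrow> P (Fs ! j) (set (take j Fs))" by blast
  define f where "f x = (LEAST i. i < length Fs \<and> Fs ! i = x)" for x
  have fnth: "f (Fs ! j) = j" if "j < length Fs" for j
    unfolding f_def
    by (rule Least_equality) (use that d nth_eq_iff_index_eq in \<open>auto simp: not_less[symmetric]\<close>)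
  have finv: "x \<in> A \<Longrightarrow> f x < length Fs \<and> Fs ! (f x) = x" for x
    using sA fnth by (metis in_set_conv_nth)
  have inj: "inj_on f A" by (metis finv inj_onI)
  show "\<exists>f::'b \<Rightarrow> nat. inj_on f A \<and> (\<forall>F\<in>A. (\<exists>G\<in>A. f G < f F) \<longrightarrow> P F {G\<in>A. f G < f F})"
  proof (intro exI conjI ballI impI)
    show "inj_on f A" by (rule inj)
    fix F assume F: "F \<in> A" and ex: "\<exists>G\<in>A. f G < f F"
    define j where "j = f F"
    have j: "j < length Fs" "Fs ! j = F" using finv F j_def by auto
    have "j \<ge> 1" using ex j_def by auto
    have eq: "{G\<in>A. f G < f F} = set (take j Fs)"
    proof
      show "{G\<in>A. f G < f F} \<subseteq> set (take j Fs)"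
      proof
        fix G assume "G \<in> {G\<in>A. f G < f F}"
        then have G: "G \<in> A" "f G < j" using j_def by auto
        then show "G \<in> set (take j Fs)" using finv[OF G(1)] j
          by (metis in_set_conv_nth length_take min.absorb4 nth_take)
      qed
    next
      show "set (take j Fs) \<subseteq> {G\<in>A. f G < f F}"
      proof
        fix G assume "G \<in> set (take j Fs)"
        then obtain i where i: "i < j" "Fs ! i = G" using j
          by (metis in_set_conv_nth length_take min.absorb4 nth_take)
        then show "G \<in> {G\<in>A. f G < f F}" using fnth[of i] j sA j_def by auto
      qed
    qed
    show "P F {G\<in>A. f G < f F}" using st \<open>j \<ge> 1\<close> j eq by metis
  qed
next
  assume "\<exists>f::'b \<Rightarrow> nat. inj_on f A \<and> (\<forall>F\<in>A. (\<exists>G\<in>A. f G < f F) \<longrightarrow> P F {G\<in>A. f G < f F})"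
  then obtain f :: "'b \<Rightarrow> nat" where inj: "inj_on f A"
    and st: "\<forall>F\<in>A. (\<exists>G\<in>A. f G < f F) \<longrightarrow> P F {G\<in>A. f G < f F}" by blast
  obtain xs where xs: "distinct xs" "set xs = A" using finite_distinct_list[OF fA] by blast
  define Fs where "Fs = sort_key f xs"
  have d: "distinct Fs" and sA: "set Fs = A" and so: "sorted (map f Fs)"
    using xs by (auto simp: Fs_def)
  have lt: "f (Fs ! i) < f (Fs ! j)" if "i < j" "j < length Fs" for i j
  proof -
    have "f (Fs ! i) \<le> f (Fs ! j)" using so that by (auto simp: sorted_iff_nth_mono)
    moreover have "Fs ! i \<noteq> Fs ! j" using d that nth_eq_iff_index_eq by fastforce
    moreover have "Fs ! i \<in> A" "Fs ! j \<in> A" using that sA by auto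
    ultimately show ?thesis using inj by (metis inj_onD order_le_imp_less_or_eq)
  qed
  show "\<exists>Fs. distinct Fs \<and> set Fs = A \<and> (\<forall>j. 1 \<le> j \<and> j < length Fs \<longrightarrow> P (Fs ! j) (set (take j Fs)))"
  proof (intro exI conjI allI impI)
    fix j assume j: "1 \<le> j \<and> j < length Fs"
    have eq: "{G\<in>A. f G < f (Fs ! j)} = set (take j Fs)"
    proof
      show "{G\<in>A. f G < f (Fs ! j)} \<subseteq> set (take j Fs)"
      proof
        fix G assume G: "G \<in> {G\<in>A. f G < f (Fs ! j)}"
        then obtain i where i: "i < length Fs" "Fs ! i = G" using sA by (auto simp: in_set_conv_nth)
        have "i < j" using lt[of j i] i G j by (metis (no_types, lifting) le_neq_implies_less mem_Collect_eq not_less order.asym)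
        then show "G \<in> set (take j Fs)" using i j by (metis in_set_conv_nth length_take min.absorb4 nth_take)
      qed
    next
      show "set (take j Fs) \<subseteq> {G\<in>A. f G < f (Fs ! j)}"
      proof
        fix G assume "G \<in> set (take j Fs)"
        then obtain i where i: "i < j" "Fs ! i = G" using j
          by (metis in_set_conv_nth length_take min.absorb4 nth_take)
        then show "G \<in> {G\<in>A. f G < f (Fs ! j)}" using lt[of i j] j sA by auto
      qed
    qed
    have "\<exists>G\<in>A. f G < f (Fs ! j)" using lt[of 0 j] j sA by (metis le_trans less_one nat_less_le not_less nth_mem)
    moreover have "Fs ! j \<in> A" using j sA by auto
    ultimately show "P (Fs ! j) (set (take j Fs))" using st eq by metis
  qed (use d sA in auto)
qed



lemma sc_finite: "simplicial_complex D \<Longrightarrow> finite D"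
  and sc_ne: "simplicial_complex D \<Longrightarrow> D \<noteq> {}"
  and sc_fin_face: "simplicial_complex D \<Longrightarrow> F \<in> D \<Longrightarrow> finite F"
  and sc_down: "simplicial_complex D \<Longrightarrow> F \<in> D \<Longrightarrow> G \<subseteq> F \<Longrightarrow> G \<in> D"
  unfolding simplicial_complex_def by blast+

lemma sc_empty: "simplicial_complex D \<Longrightarrow> {} \<in> D"
  using sc_ne sc_down by blast

lemma facets_sub: "facets D \<subseteq> D" unfolding facets_def by blast

lemma facet_max: "F \<in> facets D \<Longrightarrow> G \<in> D \<Longrightarrow> F \<subseteq> G \<Longrightarrow> G = F"
  unfolding facets_def by blast

lemma exists_facet:
  assumes "finite D" "x \<in> D"
  shows "\<exists>F\<in>facets D. x \<subseteq> F"
proof -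
  obtain m where m: "m \<in> D" "x \<subseteq> m" "\<forall>y\<in>D. m \<subseteq> y \<longrightarrow> m = y"
    using finite_has_maximal2[OF assms] by blast
  then have "m \<in> facets D" unfolding facets_mem by blast
  with m show ?thesis by blast
qed

lemma kshell_rank:
  assumes fA: "finite (facets \<Delta>)" and fF: "\<forall>F\<in>facets \<Delta>. finite F"
  shows "k_shellable k \<Delta> \<longleftrightarrow> 1 \<le> k \<and> int k \<le> sc_dim \<Delta> + 1 \<and>
     (\<exists>f::'a set \<Rightarrow> nat. inj_on f (facets \<Delta>) \<and> (\<forall>F\<in>facets \<Delta>. (\<exists>G\<in>facets \<Delta>. f G < f F)
        \<longrightarrow> step2 k F (gen {F} \<inter> gen {G\<in>facets \<Delta>. f G < f F})))"
proof -
  have r: "(\<exists>Fs. distinct Fs \<and> set Fs = facets \<Delta> \<and> (\<forall>j. 1 \<le> j \<and> j < length Fs \<longrightarrow>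
           shelling_step k (Fs ! j) (gen {Fs ! j} \<inter> gen (set (take j Fs)))))
    \<longleftrightarrow> (\<exists>f::'a set \<Rightarrow> nat. inj_on f (facets \<Delta>) \<and> (\<forall>F\<in>facets \<Delta>. (\<exists>G\<in>facets \<Delta>. f G < f F)
        \<longrightarrow> shelling_step k F (gen {F} \<inter> gen {G\<in>facets \<Delta>. f G < f F})))"
    using rank_char[OF fA, of "\<lambda>F T. shelling_step k F (gen {F} \<inter> gen T)"] by simp
  have e: "\<And>f::'a set \<Rightarrow> nat. (\<forall>F\<in>facets \<Delta>. (\<exists>G\<in>facets \<Delta>. f G < f F)
        \<longrightarrow> shelling_step k F (gen {F} \<inter> gen {G\<in>facets \<Delta>. f G < f F})) \<longleftrightarrow>
        (\<forall>F\<in>facets \<Delta>. (\<exists>G\<in>facets \<Delta>. f G < f F)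
        \<longrightarrow> step2 k F (gen {F} \<inter> gen {G\<in>facets \<Delta>. f G < f F}))"
    using step_eq fF by blast
  show ?thesis unfolding k_shellable_def r e by (rule refl)
qed

lemma step2_or_empty:
  assumes "B \<noteq> {} \<longrightarrow> step2 k F (gen {F} \<inter> gen B)"
  shows "\<exists>S. gen {F} \<inter> gen B = gen S \<and> (\<forall>\<sigma>\<in>S. \<sigma> \<subseteq> F \<and> card \<sigma> + k = card F)
     \<and> (\<forall>\<sigma>\<in>S. \<forall>\<tau>\<in>S. \<sigma> \<noteq> \<tau> \<longrightarrow> F \<subseteq> \<sigma> \<union> \<tau>) \<and> (B \<noteq> {} \<longrightarrow> S \<noteq> {})"
proof (cases "B = {}")
  case True
  then have "gen {F} \<inter> gen B = gen {}" by (simp add: gen_def)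
  then show ?thesis using True by blast
next
  case False
  then show ?thesis using assms unfolding step2_def by metis
qed

lemma lex_less:
  fixes a a' b b' N :: nat
  assumes "a < N" "a' < N"
  shows "b' * N + a' < b * N + a \<longleftrightarrow> b' < b \<or> (b' = b \<and> a' < a)"
proof (cases "b' < b")
  case True
  then have "b' * N + N \<le> b * N" by (metis Suc_leI mult_Suc mult_le_mono1 add.commute)
  then show ?thesis using True assms by linarith
next
  case False
  show ?thesis
  proof (cases "b' = b")
    case True then show ?thesis by simp
  next
    case False2: False
    then have "b < b'" using False by linarith
    then have "b * N + N \<le> b' * N" by (metis Suc_leI mult_Suc mult_le_mono1 add.commute)
    then show ?thesis using False False2 assms by linarith
  qed
qed

lemma join_comm: "join A B = join B A"
  unfolding join_def by blast



locale two =
  fixes D1 D2 :: "'a set set" and V1 V2 :: "'a set"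
  assumes sc1: "simplicial_complex D1" and sc2: "simplicial_complex D2"
    and P1: "D1 \<subseteq> Pow V1" and P2: "D2 \<subseteq> Pow V2" and disj: "V1 \<inter> V2 = {}"
begin

lemma sub1: "x \<in> D1 \<Longrightarrow> x \<subseteq> V1" using P1 by blast
lemma sub2: "x \<in> D2 \<Longrightarrow> x \<subseteq> V2" using P2 by blast

lemma int1: "\<sigma> \<subseteq> V1 \<Longrightarrow> \<tau> \<subseteq> V2 \<Longrightarrow> (\<sigma> \<union> \<tau>) \<inter> V1 = \<sigma>" using disj by blast
lemma int2: "\<sigma> \<subseteq> V1 \<Longrightarrow> \<tau> \<subseteq> V2 \<Longrightarrow> (\<sigma> \<union> \<tau>) \<inter> V2 = \<tau>" using disj by blast

lemma join_mem: "x \<in> join D1 D2 \<longleftrightarrow> (\<exists>\<sigma>\<in>D1. \<exists>\<tau>\<in>D2. x = \<sigma> \<union> \<tau>)"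
  unfolding join_def by blast

lemma join_finite: "finite (join D1 D2)"
proof -
  have "join D1 D2 = (\<lambda>(a,b). a \<union> b) ` (D1 \<times> D2)" unfolding join_def by auto
  then show ?thesis using sc_finite[OF sc1] sc_finite[OF sc2] by simp
qed

lemma join_face_finite: "x \<in> join D1 D2 \<Longrightarrow> finite x"
  unfolding join_mem using sc_fin_face[OF sc1] sc_fin_face[OF sc2] by blast

lemma facets_join: "H \<in> facets (join D1 D2) \<longleftrightarrow> (\<exists>F\<in>facets D1. \<exists>G\<in>facets D2. H = F \<union> G)"
proof
  assume H: "H \<in> facets (join D1 D2)"
  then have "H \<in> join D1 D2" using facets_sub by blast
  then have "\<exists>\<sigma>\<in>D1. \<exists>\<tau>\<in>D2. H = \<sigma> \<union> \<tau>" by (simp only: join_mem)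
  then obtain \<sigma> \<tau> where st: "\<sigma> \<in> D1" "\<tau> \<in> D2" "H = \<sigma> \<union> \<tau>" by blast
  obtain F where F: "F \<in> facets D1" "\<sigma> \<subseteq> F" using exists_facet[OF sc_finite[OF sc1] st(1)] by blast
  obtain G where G: "G \<in> facets D2" "\<tau> \<subseteq> G" using exists_facet[OF sc_finite[OF sc2] st(2)] by blast
  have FG: "F \<in> D1" "G \<in> D2" using F(1) G(1) facets_sub by blast+
  have "\<exists>\<sigma>\<in>D1. \<exists>\<tau>\<in>D2. F \<union> G = \<sigma> \<union> \<tau>" using FG by blast
  then have "F \<union> G \<in> join D1 D2" by (simp only: join_mem)
  moreover have "H \<subseteq> F \<union> G" using st(3) F(2) G(2) by blast
  ultimately have "F \<union> G = H" by (rule facet_max[OF H])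
  with F G show "\<exists>F\<in>facets D1. \<exists>G\<in>facets D2. H = F \<union> G" by blast
next
  assume "\<exists>F\<in>facets D1. \<exists>G\<in>facets D2. H = F \<union> G"
  then obtain F G where F: "F \<in> facets D1" and G: "G \<in> facets D2" and H: "H = F \<union> G" by blast
  have FV: "F \<subseteq> V1" "G \<subseteq> V2" using F G facets_sub sub1 sub2 by blast+
  have "H \<in> join D1 D2" unfolding join_mem H using F G facets_sub by blast
  moreover have "\<forall>K\<in>join D1 D2. H \<subseteq> K \<longrightarrow> K = H"
  proof (intro ballI impI)
    fix K assume K: "K \<in> join D1 D2" "H \<subseteq> K"
    then obtain \<sigma> \<tau> where st: "\<sigma> \<in> D1" "\<tau> \<in> D2" "K = \<sigma> \<union> \<tau>" unfolding join_mem by blast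
    have sv: "\<sigma> \<subseteq> V1" "\<tau> \<subseteq> V2" using st sub1 sub2 by blast+
    have e1: "F = H \<inter> V1" "G = H \<inter> V2" using int1[OF FV] int2[OF FV] H by simp_all
    have e2: "\<sigma> = K \<inter> V1" "\<tau> = K \<inter> V2" using int1[OF sv] int2[OF sv] st(3) by simp_all
    have "F \<subseteq> \<sigma>" using K(2) e1 e2 by blast
    then have "\<sigma> = F" using facet_max[OF F st(1)] by blast
    have "G \<subseteq> \<tau>" using K(2) e1 e2 by blast
    then have "\<tau> = G" using facet_max[OF G st(2)] by blast
    show "K = H" using \<open>\<sigma> = F\<close> \<open>\<tau> = G\<close> st H by blast
  qed
  ultimately show "H \<in> facets (join D1 D2)" unfolding facets_mem by blast
qed

lemma fin_facets1: "finite (facets D1)" using sc_finite[OF sc1] facets_sub finite_subset by blast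
lemma fin_facets2: "finite (facets D2)" using sc_finite[OF sc2] facets_sub finite_subset by blast
lemma fin_facetsJ: "finite (facets (join D1 D2))" using join_finite facets_sub finite_subset by blast
lemma ff1: "\<forall>F\<in>facets D1. finite F" using sc_fin_face[OF sc1] facets_sub by blast
lemma ff2: "\<forall>F\<in>facets D2. finite F" using sc_fin_face[OF sc2] facets_sub by blast
lemma ffJ: "\<forall>F\<in>facets (join D1 D2). finite F" using join_face_finite facets_sub by blast

lemma dim_join: "sc_dim D1 \<le> sc_dim (join D1 D2)"
proof -
  have ne: "card ` D1 \<noteq> {}" using sc_ne[OF sc1] by blast
  obtain \<sigma> where s: "\<sigma> \<in> D1" "card \<sigma> = Max (card ` D1)"
    using Max_in[OF finite_imageI[OF sc_finite[OF sc1]] ne] by auto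
  have "\<sigma> \<union> {} \<in> join D1 D2" unfolding join_mem using s sc_empty[OF sc2] by blast
  then have "card \<sigma> \<le> Max (card ` join D1 D2)" using join_finite by simp
  then show ?thesis unfolding sc_dim_def using s by simp
qed

end


context two begin

lemma join_to_1:
  assumes J: "k_shellable k (join D1 D2)" and kd: "int k \<le> sc_dim D1 + 1"
  shows "k_shellable k D1"
proof -
  let ?J = "join D1 D2"
  have J': "1 \<le> k \<and> int k \<le> sc_dim ?J + 1 \<and>
     (\<exists>f::'a set \<Rightarrow> nat. inj_on f (facets ?J) \<and> (\<forall>F\<in>facets ?J. (\<exists>G\<in>facets ?J. f G < f F)
        \<longrightarrow> step2 k F (gen {F} \<inter> gen {G\<in>facets ?J. f G < f F})))"
    using J kshell_rank[OF fin_facetsJ ffJ] by blast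
  then have k1: "1 \<le> k" by blast
  from J' obtain f :: "'a set \<Rightarrow> nat" where injf: "inj_on f (facets ?J)"
    and stJ: "\<forall>H\<in>facets ?J. (\<exists>G\<in>facets ?J. f G < f H)
        \<longrightarrow> step2 k H (gen {H} \<inter> gen {G\<in>facets ?J. f G < f H})" by blast
  obtain x where "x \<in> D2" using sc_ne[OF sc2] by blast
  then obtain G0 where G0: "G0 \<in> facets D2" using exists_facet[OF sc_finite[OF sc2]] by blast
  have G0V: "G0 \<subseteq> V2" using G0 facets_sub sub2 by blast
  have fG0: "finite G0" using G0 ff2 by blast
  define f1 where "f1 F = f (F \<union> G0)" for F
  have inJ: "F \<union> G0 \<in> facets ?J" if "F \<in> facets D1" for F
    using that G0 facets_join by blast
  have FV: "F \<subseteq> V1" if "F \<in> facets D1" for F using that facets_sub sub1 by blast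
  have inj1: "inj_on f1 (facets D1)"
  proof (rule inj_onI)
    fix F F' assume a: "F \<in> facets D1" "F' \<in> facets D1" "f1 F = f1 F'"
    then have "F \<union> G0 = F' \<union> G0" using injf inJ unfolding f1_def by (meson inj_onD)
    then have "(F \<union> G0) \<inter> V1 = (F' \<union> G0) \<inter> V1" by simp
    then show "F = F'" using int1[OF FV[OF a(1)] G0V] int1[OF FV[OF a(2)] G0V] by simp
  qed
  have st1: "\<forall>F\<in>facets D1. (\<exists>F'\<in>facets D1. f1 F' < f1 F)
        \<longrightarrow> step2 k F (gen {F} \<inter> gen {F'\<in>facets D1. f1 F' < f1 F})"
  proof (intro ballI impI)
    fix F assume F: "F \<in> facets D1" and ex: "\<exists>F'\<in>facets D1. f1 F' < f1 F"
    then obtain F' where F': "F' \<in> facets D1" "f1 F' < f1 F" by blast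
    define H where "H = F \<union> G0"
    define PJ where "PJ = {G\<in>facets ?J. f G < f H}"
    define P1 where "P1 = {F'\<in>facets D1. f1 F' < f1 F}"
    have HJ: "H \<in> facets ?J" using inJ[OF F] H_def by simp
    have ex: "\<exists>G\<in>facets ?J. f G < f H"
    proof
      show "F' \<union> G0 \<in> facets ?J" using inJ[OF F'(1)] .
      show "f (F' \<union> G0) < f H" using F'(2) unfolding f1_def H_def .
    qed
    have "step2 k H (gen {H} \<inter> gen {G\<in>facets ?J. f G < f H})" using bspec[OF stJ HJ] ex by (rule mp)
    then have "step2 k H (gen {H} \<inter> gen PJ)" unfolding PJ_def .
    then have "\<exists>S. S \<noteq> {} \<and> (\<forall>\<sigma>\<in>S. \<sigma> \<subseteq> H \<and> card \<sigma> + k = card H) \<and> gen {H} \<inter> gen PJ = gen S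
       \<and> (\<forall>\<sigma>\<in>S. \<forall>\<tau>\<in>S. \<sigma> \<noteq> \<tau> \<longrightarrow> H \<subseteq> \<sigma> \<union> \<tau>)" unfolding step2_def by metis
    then obtain S where S: "S \<noteq> {}" "\<forall>\<sigma>\<in>S. \<sigma> \<subseteq> H \<and> card \<sigma> + k = card H" "gen {H} \<inter> gen PJ = gen S"
       "\<forall>\<sigma>\<in>S. \<forall>\<tau>\<in>S. \<sigma> \<noteq> \<tau> \<longrightarrow> H \<subseteq> \<sigma> \<union> \<tau>" by (elim exE conjE) blast
    define S1 where "S1 = (\<lambda>s. s - G0) ` {s\<in>S. G0 \<subseteq> s}"
    have FV1: "F \<subseteq> V1" using FV[OF F] .
    have FG0: "F \<inter> G0 = {}" using FV1 G0V disj by blast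
    have fF: "finite F" using F ff1 by blast
    have cH: "card H = card F + card G0" unfolding H_def using card_Un_disjoint[OF fF fG0 FG0] .
    have PJmem: "F'' \<union> G0 \<in> PJ" if "F'' \<in> P1" for F''
      using that inJ unfolding PJ_def P1_def f1_def H_def by blast
    have eq: "gen {F} \<inter> gen P1 = gen S1"
    proof
      show "gen {F} \<inter> gen P1 \<subseteq> gen S1"
      proof
        fix x assume x: "x \<in> gen {F} \<inter> gen P1"
        then have xF: "x \<subseteq> F" by (simp add: gen_mem)
        from x obtain F'' where F'': "F'' \<in> P1" "x \<subseteq> F''" by (auto simp: gen_mem)
        have "x \<union> G0 \<subseteq> H" using xF H_def by blast
        moreover have "x \<union> G0 \<subseteq> F'' \<union> G0" using F'' by blast
        ultimately have "x \<union> G0 \<in> gen {H} \<inter> gen PJ" using PJmem[OF F''(1)] by (auto simp: gen_mem)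
        then obtain s where s: "s \<in> S" "x \<union> G0 \<subseteq> s" using S(3) by (auto simp: gen_mem)
        have "s - G0 \<in> S1" using s unfolding S1_def by blast
        moreover have "x \<subseteq> s - G0" using s xF FG0 by blast
        ultimately show "x \<in> gen S1" by (auto simp: gen_mem)
      qed
    next
      show "gen S1 \<subseteq> gen {F} \<inter> gen P1"
      proof
        fix x assume "x \<in> gen S1"
        then obtain s where s: "s \<in> S" "G0 \<subseteq> s" "x \<subseteq> s - G0" unfolding S1_def gen_mem by blast
        have "s \<in> gen S" using s(1) by (auto simp: gen_mem)
        then have "s \<in> gen {H} \<inter> gen PJ" using S(3) by simp
        then have sH: "s \<subseteq> H" and "\<exists>H'\<in>PJ. s \<subseteq> H'" by (auto simp: gen_mem)
        then obtain H' where H': "H' \<in> PJ" "s \<subseteq> H'" by blast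
        then have H'J: "H' \<in> facets ?J" "f H' < f H" unfolding PJ_def by auto
        then obtain F'' G'' where FG'': "F'' \<in> facets D1" "G'' \<in> facets D2" "H' = F'' \<union> G''"
          using facets_join by blast
        have "F'' \<subseteq> V1" using FV FG''(1) by blast
        then have "G0 \<subseteq> G''" using s(2) H'(2) FG''(3) G0V disj by blast
        then have "G'' = G0" using facet_max[OF G0] FG''(2) facets_sub by blast
        then have "F'' \<in> P1" using FG'' H'J unfolding P1_def f1_def H_def by simp
        moreover have "x \<subseteq> F''" using s(3) H'(2) FG''(3) \<open>G'' = G0\<close> by blast
        moreover have "x \<subseteq> F" using s(3) sH H_def by blast
        ultimately show "x \<in> gen {F} \<inter> gen P1" by (auto simp: gen_mem)
      qed
    qed
    have ne: "S1 \<noteq> {}"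
    proof -
      have "F' \<in> P1" using F' unfolding P1_def by blast
      have "G0 \<in> gen {H} \<inter> gen PJ" using PJmem[OF \<open>F' \<in> P1\<close>] H_def by (auto simp: gen_mem)
      then obtain s where "s \<in> S" "G0 \<subseteq> s" using S(3) by (auto simp: gen_mem)
      then show ?thesis unfolding S1_def by blast
    qed
    have card1: "\<forall>\<sigma>\<in>S1. \<sigma> \<subseteq> F \<and> card \<sigma> + k = card F"
    proof
      fix \<sigma> assume "\<sigma> \<in> S1"
      then obtain s where s: "s \<in> S" "G0 \<subseteq> s" "\<sigma> = s - G0" unfolding S1_def by blast
      have sH: "s \<subseteq> H" "card s + k = card H" using S(2) s(1) by blast+
      have fs: "finite s" using sH(1) fF fG0 H_def finite_subset by blast
      have "card \<sigma> = card s - card G0" using s(3) card_Diff_subset[OF fG0 s(2)] by simp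
      moreover have "card G0 \<le> card s" using card_mono[OF fs s(2)] .
      ultimately have "card \<sigma> + k = card F" using sH(2) cH by linarith
      moreover have "\<sigma> \<subseteq> F" using s(3) sH(1) H_def by blast
      ultimately show "\<sigma> \<subseteq> F \<and> card \<sigma> + k = card F" by blast
    qed
    have cov: "\<forall>\<sigma>\<in>S1. \<forall>\<tau>\<in>S1. \<sigma> \<noteq> \<tau> \<longrightarrow> F \<subseteq> \<sigma> \<union> \<tau>"
    proof (intro ballI impI)
      fix \<sigma> \<tau> assume a: "\<sigma> \<in> S1" "\<tau> \<in> S1" "\<sigma> \<noteq> \<tau>"
      then obtain s t where st: "s \<in> S" "\<sigma> = s - G0" "t \<in> S" "\<tau> = t - G0" unfolding S1_def by blast
      then have "s \<noteq> t" using a(3) by blast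
      then have "H \<subseteq> s \<union> t" using S(4) st by blast
      then show "F \<subseteq> \<sigma> \<union> \<tau>" using st(2,4) FG0 H_def by blast
    qed
    show "step2 k F (gen {F} \<inter> gen {F'\<in>facets D1. f1 F' < f1 F})"
      unfolding step2_def P1_def[symmetric] using ne card1 eq cov by blast
  qed
  show ?thesis unfolding kshell_rank[OF fin_facets1 ff1] using k1 kd inj1 st1 by blast
qed

end


context two begin

lemma shell_join:
  assumes s1: "k_shellable k D1" and s2: "k_shellable k D2"
  shows "k_shellable k (join D1 D2)"
proof -
  let ?J = "join D1 D2"
  let ?A1 = "facets D1" and ?A2 = "facets D2"
  have h1: "1 \<le> k \<and> int k \<le> sc_dim D1 + 1 \<and>
     (\<exists>f::'a set \<Rightarrow> nat. inj_on f ?A1 \<and> (\<forall>F\<in>?A1. (\<exists>G\<in>?A1. f G < f F)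
        \<longrightarrow> step2 k F (gen {F} \<inter> gen {G\<in>?A1. f G < f F})))"
    using s1 kshell_rank[OF fin_facets1 ff1] by blast
  have h2: "(\<exists>f::'a set \<Rightarrow> nat. inj_on f ?A2 \<and> (\<forall>F\<in>?A2. (\<exists>G\<in>?A2. f G < f F)
        \<longrightarrow> step2 k F (gen {F} \<inter> gen {G\<in>?A2. f G < f F})))"
    using s2 kshell_rank[OF fin_facets2 ff2] by blast
  have k1: "1 \<le> k" and kd: "int k \<le> sc_dim D1 + 1" using h1 by blast+
  obtain f1 :: "'a set \<Rightarrow> nat" where inj1: "inj_on f1 ?A1"
    and st1: "\<forall>F\<in>?A1. (\<exists>G\<in>?A1. f1 G < f1 F) \<longrightarrow> step2 k F (gen {F} \<inter> gen {G\<in>?A1. f1 G < f1 F})"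
    using h1 by blast
  obtain f2 :: "'a set \<Rightarrow> nat" where inj2: "inj_on f2 ?A2"
    and st2: "\<forall>F\<in>?A2. (\<exists>G\<in>?A2. f2 G < f2 F) \<longrightarrow> step2 k F (gen {F} \<inter> gen {G\<in>?A2. f2 G < f2 F})"
    using h2 by blast
  define N where "N = Suc (Max (f1 ` ?A1))"
  have f1N: "f1 F < N" if "F \<in> ?A1" for F
    using that fin_facets1 unfolding N_def by (simp add: le_imp_less_Suc)
  define f where "f H = f2 (H \<inter> V2) * N + f1 (H \<inter> V1)" for H
  have V: "F \<subseteq> V1" "G \<subseteq> V2" if "F \<in> ?A1" "G \<in> ?A2" for F G
    using that facets_sub sub1 sub2 by blast+
  have fFG: "f (F \<union> G) = f2 G * N + f1 F" if "F \<in> ?A1" "G \<in> ?A2" for F G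
    unfolding f_def using int1[OF V[OF that]] int2[OF V[OF that]] by simp
  have lessiff: "f (F' \<union> G') < f (F \<union> G) \<longleftrightarrow> f2 G' < f2 G \<or> (G' = G \<and> f1 F' < f1 F)"
    if "F \<in> ?A1" "G \<in> ?A2" "F' \<in> ?A1" "G' \<in> ?A2" for F G F' G'
  proof -
    have "f (F' \<union> G') < f (F \<union> G) \<longleftrightarrow> f2 G' < f2 G \<or> (f2 G' = f2 G \<and> f1 F' < f1 F)"
      unfolding fFG[OF that(1,2)] fFG[OF that(3,4)] by (rule lex_less[OF f1N[OF that(1)] f1N[OF that(3)]])
    moreover have "f2 G' = f2 G \<longleftrightarrow> G' = G" using inj2 that(2,4) by (meson inj_onD)
    ultimately show ?thesis by blast
  qed
  have injf: "inj_on f (facets ?J)"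
  proof (rule inj_onI)
    fix H H' assume a: "H \<in> facets ?J" "H' \<in> facets ?J" "f H = f H'"
    obtain F G where FG: "F \<in> ?A1" "G \<in> ?A2" "H = F \<union> G" using a(1) facets_join by blast
    obtain F' G' where FG': "F' \<in> ?A1" "G' \<in> ?A2" "H' = F' \<union> G'" using a(2) facets_join by blast
    have e: "f2 G * N + f1 F = f2 G' * N + f1 F'" using a(3) fFG FG FG' by simp
    have "\<not> (f2 G' * N + f1 F' < f2 G * N + f1 F)" "\<not> (f2 G * N + f1 F < f2 G' * N + f1 F')"
      using e by simp_all
    then have "\<not> (f2 G' < f2 G \<or> (f2 G' = f2 G \<and> f1 F' < f1 F))" "\<not> (f2 G < f2 G' \<or> (f2 G = f2 G' \<and> f1 F < f1 F'))"
      using lex_less[OF f1N[OF FG(1)] f1N[OF FG'(1)]] lex_less[OF f1N[OF FG'(1)] f1N[OF FG(1)]] by simp_all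
    then have "f2 G = f2 G'" "f1 F = f1 F'" by linarith+
    then have "G = G'" "F = F'" using inj1 inj2 FG FG' by (meson inj_onD)+
    then show "H = H'" using FG FG' by simp
  qed
  have stJ: "\<forall>H\<in>facets ?J. (\<exists>H'\<in>facets ?J. f H' < f H)
        \<longrightarrow> step2 k H (gen {H} \<inter> gen {H'\<in>facets ?J. f H' < f H})"
  proof (intro ballI impI)
    fix H assume HJ: "H \<in> facets ?J" and ex: "\<exists>H'\<in>facets ?J. f H' < f H"
    obtain F G where F: "F \<in> ?A1" and G: "G \<in> ?A2" and H: "H = F \<union> G" using HJ facets_join by blast
    define B1 where "B1 = {F'\<in>?A1. f1 F' < f1 F}"
    define B2 where "B2 = {G'\<in>?A2. f2 G' < f2 G}"
    define PJ where "PJ = {H'\<in>facets ?J. f H' < f H}"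
    have "B1 \<noteq> {} \<longrightarrow> step2 k F (gen {F} \<inter> gen B1)" using st1 F unfolding B1_def by blast
    from step2_or_empty[OF this] obtain S1 where S1: "gen {F} \<inter> gen B1 = gen S1"
      "\<forall>\<sigma>\<in>S1. \<sigma> \<subseteq> F \<and> card \<sigma> + k = card F" "\<forall>\<sigma>\<in>S1. \<forall>\<tau>\<in>S1. \<sigma> \<noteq> \<tau> \<longrightarrow> F \<subseteq> \<sigma> \<union> \<tau>"
      "B1 \<noteq> {} \<longrightarrow> S1 \<noteq> {}" by (elim exE conjE) blast
    have "B2 \<noteq> {} \<longrightarrow> step2 k G (gen {G} \<inter> gen B2)" using st2 G unfolding B2_def by blast
    from step2_or_empty[OF this] obtain S2 where S2: "gen {G} \<inter> gen B2 = gen S2"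
      "\<forall>\<sigma>\<in>S2. \<sigma> \<subseteq> G \<and> card \<sigma> + k = card G" "\<forall>\<sigma>\<in>S2. \<forall>\<tau>\<in>S2. \<sigma> \<noteq> \<tau> \<longrightarrow> G \<subseteq> \<sigma> \<union> \<tau>"
      "B2 \<noteq> {} \<longrightarrow> S2 \<noteq> {}" by (elim exE conjE) blast
    define S where "S = (\<lambda>t. F \<union> t) ` S2 \<union> (\<lambda>s. s \<union> G) ` S1"
    have FV: "F \<subseteq> V1" and GV: "G \<subseteq> V2" using V[OF F G] by blast+
    have FGd: "F \<inter> G = {}" using FV GV disj by blast
    have fF: "finite F" and fG: "finite G" using F G ff1 ff2 by blast+
    have cH: "card H = card F + card G" unfolding H using card_Un_disjoint[OF fF fG FGd] .
    have inPJ: "F' \<union> G' \<in> PJ" if "F' \<in> ?A1" "G' \<in> ?A2" "f2 G' < f2 G \<or> (G' = G \<and> f1 F' < f1 F)" for F' G'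
    proof -
      have "F' \<union> G' \<in> facets ?J" using that(1,2) facets_join by blast
      moreover have "f (F' \<union> G') < f H" unfolding H using lessiff[OF F G that(1,2)] that(3) by blast
      ultimately show ?thesis unfolding PJ_def by blast
    qed
    have eq: "gen {H} \<inter> gen PJ = gen S"
    proof
      show "gen {H} \<inter> gen PJ \<subseteq> gen S"
      proof
        fix x assume x: "x \<in> gen {H} \<inter> gen PJ"
        then have xH: "x \<subseteq> H" by (simp add: gen_mem)
        from x obtain H' where H': "H' \<in> PJ" "x \<subseteq> H'" by (auto simp: gen_mem)
        then have H'J: "H' \<in> facets ?J" "f H' < f H" unfolding PJ_def by auto
        then obtain F' G' where F': "F' \<in> ?A1" and G': "G' \<in> ?A2" and H'e: "H' = F' \<union> G'"
          using facets_join by blast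
        have lt: "f2 G' < f2 G \<or> (G' = G \<and> f1 F' < f1 F)" using lessiff[OF F G F' G'] H'J(2) H H'e by simp
        have V': "F' \<subseteq> V1" "G' \<subseteq> V2" using V[OF F' G'] by blast+
        show "x \<in> gen S"
        proof (cases "f2 G' < f2 G")
          case True
          then have "G' \<in> B2" using G' unfolding B2_def by blast
          have "x \<inter> V2 \<subseteq> G" using xH H FV disj by blast
          moreover have "x \<inter> V2 \<subseteq> G'" using H'(2) H'e V'(1) disj by blast
          ultimately have "x \<inter> V2 \<in> gen {G} \<inter> gen B2" using \<open>G' \<in> B2\<close> by (auto simp: gen_mem)
          then obtain t where t: "t \<in> S2" "x \<inter> V2 \<subseteq> t" using S2(1) by (auto simp: gen_mem)
          have "x \<subseteq> F \<union> t" using xH H t(2) GV by blast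
          moreover have "F \<union> t \<in> S" using t(1) unfolding S_def by blast
          ultimately show ?thesis by (auto simp: gen_mem)
        next
          case False
          then have "G' = G" "f1 F' < f1 F" using lt by blast+
          then have "F' \<in> B1" using F' unfolding B1_def by blast
          have "x \<inter> V1 \<subseteq> F" using xH H GV disj by blast
          moreover have "x \<inter> V1 \<subseteq> F'" using H'(2) H'e V'(2) disj by blast
          ultimately have "x \<inter> V1 \<in> gen {F} \<inter> gen B1" using \<open>F' \<in> B1\<close> by (auto simp: gen_mem)
          then obtain s where s: "s \<in> S1" "x \<inter> V1 \<subseteq> s" using S1(1) by (auto simp: gen_mem)
          have "x \<subseteq> s \<union> G" using xH H s(2) FV by blast
          moreover have "s \<union> G \<in> S" using s(1) unfolding S_def by blast
          ultimately show ?thesis by (auto simp: gen_mem)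
        qed
      qed
    next
      show "gen S \<subseteq> gen {H} \<inter> gen PJ"
      proof
        fix x assume "x \<in> gen S"
        then obtain y where y: "y \<in> S" "x \<subseteq> y" unfolding gen_mem by blast
        have yc: "(\<exists>t\<in>S2. y = F \<union> t) \<or> (\<exists>s\<in>S1. y = s \<union> G)" using y(1) unfolding S_def by blast
        have "y \<subseteq> H \<and> (\<exists>H'\<in>PJ. y \<subseteq> H')"
        proof (cases "\<exists>t\<in>S2. y = F \<union> t")
          case True
          then obtain t where t: "t \<in> S2" "y = F \<union> t" by blast
          have "t \<in> gen S2" using t(1) unfolding gen_mem by blast
          then have "t \<in> gen {G} \<inter> gen B2" using S2(1) by simp
          then have tG: "t \<subseteq> G" and "\<exists>G'\<in>B2. t \<subseteq> G'" unfolding Int_iff gen_mem by blast+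
          then obtain G' where G': "G' \<in> B2" "t \<subseteq> G'" by blast
          have G'1: "G' \<in> ?A2" "f2 G' < f2 G" using G'(1) unfolding B2_def by blast+
          have inP: "F \<union> G' \<in> PJ" using inPJ[OF F G'1(1)] G'1(2) by blast
          have "y \<subseteq> F \<union> G'" using t(2) G'(2) by blast
          then have "\<exists>H'\<in>PJ. y \<subseteq> H'" using inP by blast
          moreover have "y \<subseteq> H" using t(2) tG H by blast
          ultimately show ?thesis by blast
        next
          case False
          then obtain s where s: "s \<in> S1" "y = s \<union> G" using yc by blast
          have "s \<in> gen S1" using s(1) unfolding gen_mem by blast
          then have "s \<in> gen {F} \<inter> gen B1" using S1(1) by simp
          then have sF: "s \<subseteq> F" and "\<exists>F'\<in>B1. s \<subseteq> F'" unfolding Int_iff gen_mem by blast+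
          then obtain F' where F': "F' \<in> B1" "s \<subseteq> F'" by blast
          have F'1: "F' \<in> ?A1" "f1 F' < f1 F" using F'(1) unfolding B1_def by blast+
          have inP: "F' \<union> G \<in> PJ" using inPJ[OF F'1(1) G] F'1(2) by blast
          have "y \<subseteq> F' \<union> G" using s(2) F'(2) by blast
          then have "\<exists>H'\<in>PJ. y \<subseteq> H'" using inP by blast
          moreover have "y \<subseteq> H" using s(2) sF H by blast
          ultimately show ?thesis by blast
        qed
        then have "x \<subseteq> H" "\<exists>H'\<in>PJ. x \<subseteq> H'" using y(2) by blast+
        then show "x \<in> gen {H} \<inter> gen PJ" unfolding Int_iff gen_mem by blast
      qed
    qed
    have ne: "S \<noteq> {}"
    proof -
      obtain H' where H': "H' \<in> facets ?J" "f H' < f H" using ex by blast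
      then obtain F' G' where F': "F' \<in> ?A1" and G': "G' \<in> ?A2" and H'e: "H' = F' \<union> G'"
        using facets_join by blast
      have lt: "f2 G' < f2 G \<or> (G' = G \<and> f1 F' < f1 F)" using lessiff[OF F G F' G'] H'(2) H H'e by simp
      then have "B2 \<noteq> {} \<or> B1 \<noteq> {}" unfolding B1_def B2_def using F' G' by blast
      then have "S2 \<noteq> {} \<or> S1 \<noteq> {}" using S1(4) S2(4) by blast
      then show ?thesis unfolding S_def by blast
    qed
    have cardS: "\<forall>\<sigma>\<in>S. \<sigma> \<subseteq> H \<and> card \<sigma> + k = card H"
    proof
      fix y assume "y \<in> S"
      then show "y \<subseteq> H \<and> card y + k = card H"
      proof (cases "y \<in> (\<lambda>t. F \<union> t) ` S2")
        case True
        then obtain t where t: "t \<in> S2" "y = F \<union> t" by blast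
        have tG: "t \<subseteq> G" "card t + k = card G" using S2(2) t(1) by blast+
        have "finite t" using tG(1) fG finite_subset by blast
        have "card y = card F + card t" unfolding t(2)
          by (rule card_Un_disjoint[OF fF \<open>finite t\<close>]) (use tG(1) FGd in blast)
        then show ?thesis using tG cH t(2) H by auto
      next
        case False
        then obtain s where s: "s \<in> S1" "y = s \<union> G" using \<open>y \<in> S\<close> unfolding S_def by blast
        have sF: "s \<subseteq> F" "card s + k = card F" using S1(2) s(1) by blast+
        have "finite s" using sF(1) fF finite_subset by blast
        have "card y = card s + card G" unfolding s(2)
          by (rule card_Un_disjoint[OF \<open>finite s\<close> fG]) (use sF(1) FGd in blast)
        then show ?thesis using sF cH s(2) H by auto
      qed
    qed
    have cov: "\<forall>\<sigma>\<in>S. \<forall>\<tau>\<in>S. \<sigma> \<noteq> \<tau> \<longrightarrow> H \<subseteq> \<sigma> \<union> \<tau>"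
    proof (intro ballI impI)
      fix y z assume yz: "y \<in> S" "z \<in> S" "y \<noteq> z"
      have yc: "(\<exists>t\<in>S2. y = F \<union> t) \<or> (\<exists>s\<in>S1. y = s \<union> G)" using yz(1) unfolding S_def by blast
      have zc: "(\<exists>t\<in>S2. z = F \<union> t) \<or> (\<exists>s\<in>S1. z = s \<union> G)" using yz(2) unfolding S_def by blast
      show "H \<subseteq> y \<union> z"
      proof (cases "\<exists>t\<in>S2. y = F \<union> t")
        case True
        then obtain t where t: "t \<in> S2" "y = F \<union> t" by blast
        show ?thesis
        proof (cases "\<exists>t\<in>S2. z = F \<union> t")
          case True
          then obtain t' where t': "t' \<in> S2" "z = F \<union> t'" by blast
          have "t \<noteq> t'" using yz(3) t t' by blast
          then have "G \<subseteq> t \<union> t'" using S2(3) t(1) t'(1) by blast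
          then show ?thesis using t(2) t'(2) H by blast
        next
          case False
          then obtain s where "z = s \<union> G" using zc by blast
          then show ?thesis using t(2) H by blast
        qed
      next
        case False
        then obtain s where s: "s \<in> S1" "y = s \<union> G" using yc by blast
        show ?thesis
        proof (cases "\<exists>t\<in>S2. z = F \<union> t")
          case True
          then obtain t' where "z = F \<union> t'" by blast
          then show ?thesis using s(2) H by blast
        next
          case False
          then obtain s' where s': "s' \<in> S1" "z = s' \<union> G" using zc by blast
          have "s \<noteq> s'" using yz(3) s s' by blast
          then have "F \<subseteq> s \<union> s'" using S1(3) s(1) s'(1) by blast
          then show ?thesis using s(2) s'(2) H by blast
        qed
      qed
    qed
    show "step2 k H (gen {H} \<inter> gen {H'\<in>facets ?J. f H' < f H})"
      unfolding step2_def PJ_def[symmetric] using ne cardS eq cov by blast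
  qed
  have kdJ: "int k \<le> sc_dim ?J + 1" using kd dim_join by linarith
  show ?thesis unfolding kshell_rank[OF fin_facetsJ ffJ] using k1 kdJ injf stJ by blast
qed

end

theorem theorem2p7:
  fixes \<Delta>1 \<Delta>2 :: "'a set set" and V1 V2 :: "'a set" and k :: nat
  assumes "simplicial_complex \<Delta>1" and "simplicial_complex \<Delta>2"
    and "\<Delta>1 \<subseteq> Pow V1" and "\<Delta>2 \<subseteq> Pow V2" and "V1 \<inter> V2 = {}"
    and "1 \<le> k" and "int k \<le> sc_dim \<Delta>1 + 1" and "int k \<le> sc_dim \<Delta>2 + 1"
  shows "(k_shellable k \<Delta>1 \<and> k_shellable k \<Delta>2) \<longleftrightarrow> k_shellable k (join \<Delta>1 \<Delta>2)"
proof -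
  interpret a: two \<Delta>1 \<Delta>2 V1 V2 using assms(1-5) by unfold_locales
  interpret b: two \<Delta>2 \<Delta>1 V2 V1 using assms(1-5) by unfold_locales auto
  show ?thesis
  proof
    assume "k_shellable k \<Delta>1 \<and> k_shellable k \<Delta>2"
    then show "k_shellable k (join \<Delta>1 \<Delta>2)" using a.shell_join by blast
  next
    assume h: "k_shellable k (join \<Delta>1 \<Delta>2)"
    have h2: "k_shellable k (join \<Delta>2 \<Delta>1)" using h join_comm by metis
    show "k_shellable k \<Delta>1 \<and> k_shellable k \<Delta>2"
      using a.join_to_1[OF h assms(7)] b.join_to_1[OF h2 assms(8)] by blast
  qed
qed

end
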